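(* Let $G=(V,E)$ be a bispanning graph, $(S,T)$ a pair of disjoint spanning trees of $G$ with $S\cup T=E$, $m=|E|/2$, and let $\langle(e_1,f_1),\dots,(e_m,f_m)\rangle$ be a unique exchange cyclic base ordering of $G$ and $(S,T)$. Then $\langle(f_m,e_m),\dots,(f_1,e_1)\rangle$ is also a unique exchange cyclic base ordering of $G$ and the same pair $(S,T)$.
   Context: Graphs are finite, undirected, possibly with parallel edges, no loops. A spanning tree is $T\subseteq E$ with $(V,T)$ connected and acyclic; $G$ is bispanning if $E$ is the disjoint union of two spanning trees. For a spanning tree $T$ and $e\notin T$, $C_G(T,e)$ is the edge set of the unique cycle in $T\cup\{e\}$; for $e\in T$, $D_G(T,e)$ is the set of edges of $G$ with one end in each component of $(V,T\setminus\{e\})$. For disjoint spanning trees $A,B$ with $A\cup B=E$: $(e,f)$ with $e\in A,f\in B$ is a unique $S$ edge exchange for $(A,B)$ if $D_G(A,e)\cap C_G(B,e)=\{e,f\}$; $(e,f)$ with $e\in B,f\in A$ is a unique $T$ edge exchange for $(A,B)$ if $D_G(B,e)\cap C_G(A,e)=\{e,f\}$. A unique exchange cyclic base ordering (UECBO) of $G$ and $(S,T)$, $m=|S|=|T|$, is a sequence $\langle(e_1,f_1),\dots,(e_m,f_m)\rangle$ together with orderings $S=\{s_1,\dots,s_m\}$, $T=\{t_1,\dots,t_m\}$ such that for each $i$, $(e_i,f_i)\in\{(s_i,t_i),(t_i,s_i)\}$ is a unique $S$ or $T$ edge exchange for $(\{s_i,\dots,s_m,t_1,\dots,t_{i-1}\},\{t_i,\dots,t_m,s_1,\dots,s_{i-1}\})$.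 *)

theory Defs
  imports Main
begin

text \<open>A finite multigraph (parallel edges allowed, no loops) is given by a vertex set V,
an edge set E and an endpoint map ends: every edge has exactly two distinct ends in V.\<close>

definition multigraph :: "'v set \<Rightarrow> 'e set \<Rightarrow> ('e \<Rightarrow> 'v set) \<Rightarrow> bool" where
  "multigraph V E ends \<longleftrightarrow> finite V \<and> finite E \<and>
     (\<forall>e\<in>E. ends e \<subseteq> V \<and> card (ends e) = 2)"

definition adj :: "('e \<Rightarrow> 'v set) \<Rightarrow> 'e set \<Rightarrow> ('v \<times> 'v) set" where
  "adj ends F = {(u, v). \<exists>e\<in>F. ends e = {u, v}}"

definition connected_on :: "'v set \<Rightarrow> ('e \<Rightarrow> 'v set) \<Rightarrow> 'e set \<Rightarrow> bool" where
  "connected_on V ends F \<longleftrightarrow> (\<forall>u\<in>V. \<forall>v\<in>V. (u, v) \<in> (adj ends F)\<^sup>*)"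

text \<open>The edge set C forms a cycle: a nonempty finite connected edge set in which every
vertex it touches has degree exactly 2 (with parallel edges, two parallel edges form a cycle).\<close>
definition is_cycle :: "('e \<Rightarrow> 'v set) \<Rightarrow> 'e set \<Rightarrow> bool" where
  "is_cycle ends C \<longleftrightarrow> finite C \<and> C \<noteq> {} \<and>
     connected_on (\<Union>(ends ` C)) ends C \<and>
     (\<forall>v\<in>\<Union>(ends ` C). card {f\<in>C. v \<in> ends f} = 2)"

definition acyclic_on :: "('e \<Rightarrow> 'v set) \<Rightarrow> 'e set \<Rightarrow> bool" where
  "acyclic_on ends F \<longleftrightarrow> \<not> (\<exists>C\<subseteq>F. is_cycle ends C)"

definition spanning_tree :: "'v set \<Rightarrow> 'e set \<Rightarrow> ('e \<Rightarrow> 'v set) \<Rightarrow> 'e set \<Rightarrow> bool" where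
  "spanning_tree V E ends T \<longleftrightarrow> T \<subseteq> E \<and> connected_on V ends T \<and> acyclic_on ends T"

definition bispanning :: "'v set \<Rightarrow> 'e set \<Rightarrow> ('e \<Rightarrow> 'v set) \<Rightarrow> bool" where
  "bispanning V E ends \<longleftrightarrow> (\<exists>A B. spanning_tree V E ends A \<and> spanning_tree V E ends B \<and>
      A \<inter> B = {} \<and> A \<union> B = E)"

text \<open>C_G(T,e) for e not in T: edge set of the unique cycle in T plus e.\<close>
definition fcycle :: "('e \<Rightarrow> 'v set) \<Rightarrow> 'e set \<Rightarrow> 'e \<Rightarrow> 'e set" where
  "fcycle ends T e = (THE C. C \<subseteq> insert e T \<and> is_cycle ends C)"

text \<open>D_G(T,e) for e in T: edges of G with one end in each component of (V, T - {e}),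
the two components being those of the two ends a, b of e.\<close>
definition fcut :: "'e set \<Rightarrow> ('e \<Rightarrow> 'v set) \<Rightarrow> 'e set \<Rightarrow> 'e \<Rightarrow> 'e set" where
  "fcut E ends T e = {f\<in>E. \<exists>a b x y. ends e = {a, b} \<and> ends f = {x, y} \<and>
       (a, x) \<in> (adj ends (T - {e}))\<^sup>* \<and> (b, y) \<in> (adj ends (T - {e}))\<^sup>*}"

definition unique_S_exchange :: "'e set \<Rightarrow> ('e \<Rightarrow> 'v set) \<Rightarrow> 'e set \<Rightarrow> 'e set \<Rightarrow> 'e \<Rightarrow> 'e \<Rightarrow> bool" where
  "unique_S_exchange E ends A B e f \<longleftrightarrow> e \<in> A \<and> f \<in> B \<and>
     fcut E ends A e \<inter> fcycle ends B e = {e, f}"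

definition unique_T_exchange :: "'e set \<Rightarrow> ('e \<Rightarrow> 'v set) \<Rightarrow> 'e set \<Rightarrow> 'e set \<Rightarrow> 'e \<Rightarrow> 'e \<Rightarrow> bool" where
  "unique_T_exchange E ends A B e f \<longleftrightarrow> e \<in> B \<and> f \<in> A \<and>
     fcut E ends B e \<inter> fcycle ends A e = {e, f}"

text \<open>Unique exchange cyclic base ordering of G and (S,T); the sequence
<(e_1,f_1),...,(e_m,f_m)> is the list ps, (e_i,f_i) = ps ! (i - 1).\<close>
definition UECBO :: "'v set \<Rightarrow> 'e set \<Rightarrow> ('e \<Rightarrow> 'v set) \<Rightarrow> 'e set \<Rightarrow> 'e set \<Rightarrow> ('e \<times> 'e) list \<Rightarrow> bool" where
  "UECBO V E ends S T ps \<longleftrightarrow>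
     (let m = length ps in card S = m \<and> card T = m \<and>
      (\<exists>s t. bij_betw s {1..m} S \<and> bij_betw t {1..m} T \<and>
        (\<forall>i\<in>{1..m}.
           (ps ! (i - 1) = (s i, t i) \<or> ps ! (i - 1) = (t i, s i)) \<and>
           (let A = s ` {i..m} \<union> t ` {1..<i}; B = t ` {i..m} \<union> s ` {1..<i};
                (e, f) = ps ! (i - 1) in
              unique_S_exchange E ends A B e f \<or> unique_T_exchange E ends A B e f))))"

end

theory Submission
  imports Defs
begin

lemma adj_rtrancl_sym:
  assumes "(u, v) \<in> (adj ends F)\<^sup>*" shows "(v, u) \<in> (adj ends F)\<^sup>*"
  using assms
proof (induct rule: rtrancl_induct)
  case base then show ?case by simp
next
  case (step y z)
  have "(z, y) \<in> adj ends F" using step(2) unfolding adj_def by (auto simp: insert_commute)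
  then show ?case using step(3) by (rule converse_rtrancl_into_rtrancl)
qed

lemma fcut_swap:
  assumes f: "f \<in> fcut E ends A e" and fA: "f \<notin> A" and eA: "e \<in> A"
  shows "fcut E ends (insert f (A - {e})) f = fcut E ends A e"
proof -
  have eq: "insert f (A - {e}) - {f} = A - {e}" using fA by auto
  define R where "R = (adj ends (A - {e}))\<^sup>*"
  have sy: "\<And>u v. (u,v) \<in> R \<Longrightarrow> (v,u) \<in> R" unfolding R_def by (rule adj_rtrancl_sym)
  have tr: "\<And>u v w. (u,v) \<in> R \<Longrightarrow> (v,w) \<in> R \<Longrightarrow> (u,w) \<in> R" unfolding R_def by auto
  from f obtain a b x y where ab: "ends e = {a,b}" "ends f = {x,y}" "(a,x) \<in> R" "(b,y) \<in> R"
    unfolding fcut_def R_def by blast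
  show ?thesis
  proof (rule set_eqI, rule iffI)
    fix g assume "g \<in> fcut E ends (insert f (A - {e})) f"
    then obtain a' b' p q where g: "g \<in> E" "ends f = {a',b'}" "ends g = {p,q}" "(a',p) \<in> R" "(b',q) \<in> R"
      unfolding fcut_def eq R_def by blast
    have "{a',b'} = {x,y}" using g ab by simp
    then have "(a' = x \<and> b' = y) \<or> (a' = y \<and> b' = x)" by (auto simp: doubleton_eq_iff)
    then show "g \<in> fcut E ends A e"
    proof
      assume "a' = x \<and> b' = y"
      then have "(a,p) \<in> R" "(b,q) \<in> R" using tr g ab by blast+
      then show ?thesis using g ab unfolding fcut_def R_def by blast
    next
      assume "a' = y \<and> b' = x"
      then have "(a,q) \<in> R" "(b,p) \<in> R" using tr g ab by blast+
      moreover have "ends g = {q,p}" using g by auto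
      ultimately show ?thesis using g ab unfolding fcut_def R_def by blast
    qed
  next
    fix g assume "g \<in> fcut E ends A e"
    then obtain a' b' p q where g: "g \<in> E" "ends e = {a',b'}" "ends g = {p,q}" "(a',p) \<in> R" "(b',q) \<in> R"
      unfolding fcut_def R_def by blast
    have "{a',b'} = {a,b}" using g ab by simp
    then have "(a' = a \<and> b' = b) \<or> (a' = b \<and> b' = a)" by (auto simp: doubleton_eq_iff)
    then show "g \<in> fcut E ends (insert f (A - {e})) f"
    proof
      assume "a' = a \<and> b' = b"
      then have "(x,p) \<in> R" "(y,q) \<in> R" using tr sy g ab by blast+
      then show ?thesis using g ab unfolding fcut_def R_def eq by blast
    next
      assume "a' = b \<and> b' = a"
      then have "(y,p) \<in> R" "(x,q) \<in> R" using tr sy g ab by blast+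
      moreover have "ends f = {y,x}" using ab by auto
      ultimately show ?thesis using g unfolding fcut_def R_def eq by blast
    qed
  qed
qed

lemma core:
  assumes "unique_S_exchange E ends A B e f" and "A \<inter> B = {}"
  shows "unique_T_exchange E ends (insert e (B - {f})) (insert f (A - {e})) f e"
proof -
  have eA: "e \<in> A" and fB: "f \<in> B" and I: "fcut E ends A e \<inter> fcycle ends B e = {e, f}"
    using assms(1) unfolding unique_S_exchange_def by auto
  have fA: "f \<notin> A" using fB assms(2) by auto
  have ff: "f \<in> fcut E ends A e" using I by auto
  have c: "fcycle ends (insert e (B - {f})) f = fcycle ends B e"
  proof -
    have "insert f (insert e (B - {f})) = insert e B" using fB by auto
    then show ?thesis unfolding fcycle_def by simp
  qed
  have "fcut E ends (insert f (A - {e})) f = fcut E ends A e" using fcut_swap[OF ff fA eA] .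
  then show ?thesis unfolding unique_T_exchange_def using c I fA by auto
qed

lemma step:
  assumes disj: "A \<inter> B = {}" and aA: "a \<in> A" and bB: "b \<in> B"
    and p: "p = (a,b) \<or> p = (b,a)"
    and ex: "case p of (e,f) \<Rightarrow> unique_S_exchange E ends A B e f \<or> unique_T_exchange E ends A B e f"
  shows "case prod.swap p of (e,f) \<Rightarrow> unique_S_exchange E ends (insert a (B - {b})) (insert b (A - {a})) e f
          \<or> unique_T_exchange E ends (insert a (B - {b})) (insert b (A - {a})) e f"
  using p
proof
  assume pe: "p = (a,b)"
  have "\<not> unique_T_exchange E ends A B a b" using disj aA unfolding unique_T_exchange_def by auto
  then have "unique_S_exchange E ends A B a b" using ex pe by auto
  from core[OF this disj] show ?thesis using pe by simp
next
  assume pe: "p = (b,a)"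
  have "\<not> unique_S_exchange E ends A B b a" using disj bB unfolding unique_S_exchange_def by auto
  then have "unique_T_exchange E ends A B b a" using ex pe by auto
  then have "unique_S_exchange E ends B A b a"
    unfolding unique_T_exchange_def unique_S_exchange_def by auto
  from core[OF this] disj have "unique_T_exchange E ends (insert b (A - {a})) (insert a (B - {b})) a b"
    by (simp add: Int_commute)
  then show ?thesis using pe unfolding unique_T_exchange_def unique_S_exchange_def by simp
qed

lemma setfacts:
  fixes s t :: "nat \<Rightarrow> 'e"
  assumes j: "j \<in> {1..(m::nat)}" and si: "\<And>k l. k\<in>{1..m} \<Longrightarrow> l\<in>{1..m} \<Longrightarrow> s k = s l \<Longrightarrow> k = l"
  and ti: "\<And>k l. k\<in>{1..m} \<Longrightarrow> l\<in>{1..m} \<Longrightarrow> t k = t l \<Longrightarrow> k = l"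
  and st: "\<And>k l. k \<in> {1..m} \<Longrightarrow> l \<in> {1..m} \<Longrightarrow> s k \<noteq> t l"
shows "(s ` {j..m} \<union> t ` {1..<j}) \<inter> (t ` {j..m} \<union> s ` {1..<j}) = {}"
  "s ` {1..j} \<union> t ` {j+1..m} = insert (s j) ((t ` {j..m} \<union> s ` {1..<j}) - {t j})"
proof -
  show "(s ` {j..m} \<union> t ` {1..<j}) \<inter> (t ` {j..m} \<union> s ` {1..<j}) = {}"
  proof (rule equals0I)
    fix x assume "x \<in> (s ` {j..m} \<union> t ` {1..<j}) \<inter> (t ` {j..m} \<union> s ` {1..<j})"
    then show False
    proof (elim IntE UnE imageE)
      fix k l assume "x = s k" "k \<in> {j..m}" "x = t l" "l \<in> {j..m}" then show False using st[of k l] j by auto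
    next
      fix k l assume "x = s k" "k \<in> {j..m}" "x = s l" "l \<in> {1..<j}" then show False using si[of k l] j by auto
    next
      fix k l assume "x = t k" "k \<in> {1..<j}" "x = t l" "l \<in> {j..m}" then show False using ti[of k l] j by auto
    next
      fix k l assume "x = t k" "k \<in> {1..<j}" "x = s l" "l \<in> {1..<j}" then show False using st[of l k] j by auto
    qed
  qed
  show "s ` {1..j} \<union> t ` {j+1..m} = insert (s j) ((t ` {j..m} \<union> s ` {1..<j}) - {t j})"
  proof (rule set_eqI, rule iffI)
    fix x assume "x \<in> s ` {1..j} \<union> t ` {j+1..m}"
    then show "x \<in> insert (s j) ((t ` {j..m} \<union> s ` {1..<j}) - {t j})"
    proof (elim UnE imageE)
      fix k assume k: "x = s k" "k \<in> {1..j}"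
      show ?thesis
      proof (cases "k = j")
        case True then show ?thesis using k by simp
      next
        case False then have "k \<in> {1..<j}" using k by auto
        then show ?thesis using k st[of k j] j by auto
      qed
    next
      fix k assume k: "x = t k" "k \<in> {j+1..m}"
      then show ?thesis using ti[of k j] j by auto
    qed
  next
    fix x assume "x \<in> insert (s j) ((t ` {j..m} \<union> s ` {1..<j}) - {t j})"
    then show "x \<in> s ` {1..j} \<union> t ` {j+1..m}"
    proof (elim insertE DiffE UnE imageE)
      assume "x = s j" then show ?thesis using j by auto
    next
      fix k assume k: "x = t k" "k \<in> {j..m}" "x \<notin> {t j}"
      then have "k \<noteq> j" by auto
      then show ?thesis using k by auto
    next
      fix k assume k: "x = s k" "k \<in> {1..<j}"
      then show ?thesis by auto
    qed
  qed
qed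

theorem mainTheorem6:
  fixes V :: "'v set" and E :: "'e set" and ends :: "'e \<Rightarrow> 'v set"
    and S T :: "'e set" and ps :: "('e \<times> 'e) list"
  assumes "multigraph V E ends"
    and "bispanning V E ends"
    and "spanning_tree V E ends S" and "spanning_tree V E ends T"
    and "S \<inter> T = {}" and "S \<union> T = E"
    and "length ps = card E div 2"
    and "UECBO V E ends S T ps"
  shows "UECBO V E ends S T (rev (map prod.swap ps))"
proof -
  define m where "m = length ps"
  obtain s t where cS: "card S = m" and cT: "card T = m" and bs: "bij_betw s {1..m} S"
    and bt: "bij_betw t {1..m} T"
    and H: "\<forall>i\<in>{1..m}.
           (ps ! (i - 1) = (s i, t i) \<or> ps ! (i - 1) = (t i, s i)) \<and>
           (let A = s ` {i..m} \<union> t ` {1..<i}; B = t ` {i..m} \<union> s ` {1..<i};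
                (e, f) = ps ! (i - 1) in
              unique_S_exchange E ends A B e f \<or> unique_T_exchange E ends A B e f)"
    using assms(8) unfolding UECBO_def m_def Let_def by (elim conjE exE) blast
  define r where "r = (\<lambda>i::nat. m + 1 - i)"
  have br: "bij_betw r {1..m} {1..m}"
    by (rule bij_betw_byWitness[where f'=r]) (auto simp: r_def)
  define s' where "s' = s \<circ> r"
  define t' where "t' = t \<circ> r"
  have bs': "bij_betw s' {1..m} S" unfolding s'_def using bij_betw_trans[OF br bs] .
  have bt': "bij_betw t' {1..m} T" unfolding t'_def using bij_betw_trans[OF br bt] .
  have injs: "inj_on s {1..m}" and injt: "inj_on t {1..m}" using bs bt bij_betw_def by auto
  have sS: "\<And>k. k \<in> {1..m} \<Longrightarrow> s k \<in> S" using bs bij_betwE by blast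
  have tT: "\<And>k. k \<in> {1..m} \<Longrightarrow> t k \<in> T" using bt bij_betwE by blast
  have st: "\<And>k l. k \<in> {1..m} \<Longrightarrow> l \<in> {1..m} \<Longrightarrow> s k \<noteq> t l" by (metis IntI assms(5) empty_iff sS tT)
  have "\<forall>i\<in>{1..m}.
           (rev (map prod.swap ps) ! (i - 1) = (s' i, t' i) \<or> rev (map prod.swap ps) ! (i - 1) = (t' i, s' i)) \<and>
           (let A = s' ` {i..m} \<union> t' ` {1..<i}; B = t' ` {i..m} \<union> s' ` {1..<i};
                (e, f) = rev (map prod.swap ps) ! (i - 1) in
              unique_S_exchange E ends A B e f \<or> unique_T_exchange E ends A B e f)"
  proof
    fix i assume i: "i \<in> {1..m}"
    define j where "j = m + 1 - i"
    have j: "j \<in> {1..m}" using i j_def by auto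
    have nth: "rev (map prod.swap ps) ! (i - 1) = prod.swap (ps ! (j - 1))"
      using i unfolding j_def m_def by (auto simp: rev_nth)
    have s'i: "s' i = s j" "t' i = t j" unfolding s'_def t'_def r_def j_def by auto
    have im1: "r ` {i..m} = {1..j}"
    proof
      show "r ` {i..m} \<subseteq> {1..j}" unfolding r_def j_def using i by auto
      show "{1..j} \<subseteq> r ` {i..m}"
      proof
        fix x assume "x \<in> {1..j}"
        then show "x \<in> r ` {i..m}" using i unfolding r_def j_def
          by (intro rev_image_eqI[of "m + 1 - x"]) auto
      qed
    qed
    have im2: "r ` {1..<i} = {j+1..m}"
    proof
      show "r ` {1..<i} \<subseteq> {j+1..m}" unfolding r_def j_def using i by auto
      show "{j+1..m} \<subseteq> r ` {1..<i}"
      proof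
        fix x assume "x \<in> {j+1..m}"
        then show "x \<in> r ` {1..<i}" using i unfolding r_def j_def
          by (intro rev_image_eqI[of "m + 1 - x"]) auto
      qed
    qed
    define A where "A = s ` {j..m} \<union> t ` {1..<j}"
    define B where "B = t ` {j..m} \<union> s ` {1..<j}"
    have Hj: "(ps ! (j - 1) = (s j, t j) \<or> ps ! (j - 1) = (t j, s j))"
      and Hj2: "case ps ! (j - 1) of (e,f) \<Rightarrow> unique_S_exchange E ends A B e f \<or> unique_T_exchange E ends A B e f"
      using H j unfolding A_def B_def Let_def by auto
    have si: "\<And>k l. k\<in>{1..m} \<Longrightarrow> l\<in>{1..m} \<Longrightarrow> s k = s l \<Longrightarrow> k = l" using injs inj_on_eq_iff by metis
    have ti: "\<And>k l. k\<in>{1..m} \<Longrightarrow> l\<in>{1..m} \<Longrightarrow> t k = t l \<Longrightarrow> k = l" using injt inj_on_eq_iff by metis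
    have ts: "\<And>k l. k\<in>{1..m} \<Longrightarrow> l\<in>{1..m} \<Longrightarrow> t k \<noteq> s l" using st by metis
    note F1 = setfacts[OF j si ti st] and F2 = setfacts[OF j ti si ts]
    have disj: "A \<inter> B = {}" unfolding A_def B_def using F1(1) .
    have aA: "s j \<in> A" and bB: "t j \<in> B" unfolding A_def B_def using j by auto
    have A': "s' ` {i..m} \<union> t' ` {1..<i} = insert (s j) (B - {t j})"
    proof -
      have "s' ` {i..m} \<union> t' ` {1..<i} = s ` {1..j} \<union> t ` {j+1..m}"
        unfolding s'_def t'_def image_comp[symmetric] im1 im2 by simp
      also have "\<dots> = insert (s j) (B - {t j})" unfolding B_def using F1(2) .
      finally show ?thesis .
    qed
    have B': "t' ` {i..m} \<union> s' ` {1..<i} = insert (t j) (A - {s j})"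
    proof -
      have "t' ` {i..m} \<union> s' ` {1..<i} = t ` {1..j} \<union> s ` {j+1..m}"
        unfolding s'_def t'_def image_comp[symmetric] im1 im2 by simp
      also have "\<dots> = insert (t j) (A - {s j})" unfolding A_def using F2(2) .
      finally show ?thesis .
    qed
    have "case prod.swap (ps ! (j - 1)) of (e,f) \<Rightarrow> unique_S_exchange E ends (insert (s j) (B - {t j})) (insert (t j) (A - {s j})) e f
          \<or> unique_T_exchange E ends (insert (s j) (B - {t j})) (insert (t j) (A - {s j})) e f"
      by (rule step[OF disj aA bB Hj Hj2])
    then show "(rev (map prod.swap ps) ! (i - 1) = (s' i, t' i) \<or> rev (map prod.swap ps) ! (i - 1) = (t' i, s' i)) \<and>
           (let A = s' ` {i..m} \<union> t' ` {1..<i}; B = t' ` {i..m} \<union> s' ` {1..<i};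
                (e, f) = rev (map prod.swap ps) ! (i - 1) in
              unique_S_exchange E ends A B e f \<or> unique_T_exchange E ends A B e f)"
      unfolding nth A' B' Let_def s'i using Hj by (auto split: prod.splits)
  qed
  then show ?thesis unfolding UECBO_def Let_def using cS cT bs' bt' m_def by auto
qed

end
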